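(* Let $\Sigma$ be an alphabet and $(\mathcal{O},d)$ a pseudometric space. Then: (1) the mapping $T\mapsto V(T)$ extends to a functor $V:\mathbf{TS}_{\Sigma}\mathcal{O}\to\mathbf{Tr}_{\Sigma}\mathcal{O}$ which is a coreflection; (2) for every transition system with observations $X$, the morphism $\mathrm{unf}_X:V(X)\to X$ sending a run to its last state is a $0$-bounded $\mathbf{Lin}_{\Sigma}\mathcal{O}$-open morphism; (3) for every $\epsilon\ge0$, there is an $\epsilon$-approximate bisimulation between $T$ and $T'$ if and only if there is an $\epsilon$-approximate bisimulation between $V(T)$ and $V(T')$.
   Context: A transition system over $\Sigma$ is $(S,i,\Delta)$ with $i\in S$, $\Delta\subseteq S\times\Sigma\times S$; morphisms are functions on states preserving the initial state and transitions. A run of $(S,i,\Delta)$ is a sequence $i=q_0\xrightarrow{a_1}q_1\cdots\xrightarrow{a_n}q_n$ with $(q_{j-1},a_j,q_j)\in\Delta$. A synchronization tree is a transition system in which every state is the end of exactly one run (from the initial state). A transition system with observations is $(S,i,\Delta,\omega)$ with $\omega:S\to\mathcal{O}$; an $\epsilon$-bounded morphism is a transition system morphism $f$ with $d(\omega(s),\omega'(f(s)))\le\epsilon$ for all $s$, and a bounded morphism is one that is $\epsilon$-bounded for some $\epsilon\ge0$; these form the category $\mathbf{TS}_{\Sigma}\mathcal{O}$. $\mathbf{Tr}_{\Sigma}\mathcal{O}$ is its full subcategory of systems whose underlying transition system is a synchronization tree, and $\mathbf{Lin}_{\Sigma}\mathcal{O}$ its full subcategory of systems whose underlying transition system is a finite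 linear system $L(a_1\cdots a_n)$ (states $0,\dots,n$, initial $0$, transitions $(j-1,a_j,j)$). For $T=(S,i,\Delta,\omega)$, $V(T)$ has as states the runs of $T$, initial state the one-element run $i$, transitions $(\pi,a,\pi\xrightarrow{a}q)$ for each run $\pi$ ending in $q_n$ and each $(q_n,a,q)\in\Delta$, and observation $\omega(q_0\xrightarrow{a_1}\cdots\xrightarrow{a_n}q_n)=\omega(q_n)$. A functor is a coreflection if it is a right adjoint whose left adjoint is fully faithful (equivalently, a right adjoint whose adjunction unit is an isomorphism). A morphism $f:X\to Y$ is $\mathcal{P}$-open if for every $e:P\to P'$ in $\mathcal{P}$ and $p:P\to X$, $q':P'\to Y$ with $f\circ p=q'\circ e$ there is $q:P'\to X$ with $q\circ e=p$, $f\circ q=q'$. An $\epsilon$-approximate bisimulation between $(S,i,\Delta,\omega)$ and $(S',i',\Delta',\omega')$ is a strong bisimulation $R$ between the underlying transition systems (containing $(i,i')$ and satisfying the usual back-and-forth transfer conditions) with $d(\omega(s),\omega'(s'))\le\epsilon$ for all $(s,s')\in R$. *)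

theory Defs
  imports Main "HOL.Real"
begin

definition pseudometric :: "('o \<Rightarrow> 'o \<Rightarrow> real) \<Rightarrow> bool" where
  "pseudometric d \<longleftrightarrow>
     (\<forall>x. d x x = 0) \<and> (\<forall>x y. 0 \<le> d x y) \<and> (\<forall>x y. d x y = d y x) \<and>
     (\<forall>x y z. d x z \<le> d x y + d y z)"

record ('s, 'a, 'o) tso =
  St :: "'s set"
  init :: 's
  trans :: "('s \<times> 'a \<times> 's) set"
  obs :: "'s \<Rightarrow> 'o"

definition wf_tso :: "'a set \<Rightarrow> ('s, 'a, 'o) tso \<Rightarrow> bool" where
  "wf_tso \<Sigma> T \<longleftrightarrow> init T \<in> St T \<and> trans T \<subseteq> St T \<times> \<Sigma> \<times> St T"

text \<open>Morphisms of transition systems (functions on states; only their values on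
  the state set matter).\<close>
definition ts_morphism :: "('s, 'a, 'o) tso \<Rightarrow> ('t, 'a, 'o) tso \<Rightarrow> ('s \<Rightarrow> 't) \<Rightarrow> bool" where
  "ts_morphism T T' f \<longleftrightarrow>
     (\<forall>s\<in>St T. f s \<in> St T') \<and> f (init T) = init T' \<and>
     (\<forall>s a t. (s, a, t) \<in> trans T \<longrightarrow> (f s, a, f t) \<in> trans T')"

definition eps_bounded ::
  "('o \<Rightarrow> 'o \<Rightarrow> real) \<Rightarrow> real \<Rightarrow> ('s, 'a, 'o) tso \<Rightarrow> ('t, 'a, 'o) tso \<Rightarrow> ('s \<Rightarrow> 't) \<Rightarrow> bool" where
  "eps_bounded d \<epsilon> T T' f \<longleftrightarrow>
     ts_morphism T T' f \<and> (\<forall>s\<in>St T. d (obs T s) (obs T' (f s)) \<le> \<epsilon>)"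

definition bounded_morphism ::
  "('o \<Rightarrow> 'o \<Rightarrow> real) \<Rightarrow> ('s, 'a, 'o) tso \<Rightarrow> ('t, 'a, 'o) tso \<Rightarrow> ('s \<Rightarrow> 't) \<Rightarrow> bool" where
  "bounded_morphism d T T' f \<longleftrightarrow> (\<exists>\<epsilon>\<ge>0. eps_bounded d \<epsilon> T T' f)"

text \<open>A run q0 -a1-> q1 ... -an-> qn is represented as the pair (q0, [(a1,q1),...,(an,qn)]).\<close>
type_synonym ('s, 'a) run = "'s \<times> ('a \<times> 's) list"

fun path_from :: "('s \<times> 'a \<times> 's) set \<Rightarrow> 's \<Rightarrow> ('a \<times> 's) list \<Rightarrow> bool" where
  "path_from D q [] = True"
| "path_from D q ((a, q') # xs) = ((q, a, q') \<in> D \<and> path_from D q' xs)"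

definition is_run :: "('s, 'a, 'o) tso \<Rightarrow> ('s, 'a) run \<Rightarrow> bool" where
  "is_run T \<pi> \<longleftrightarrow> fst \<pi> = init T \<and> path_from (trans T) (fst \<pi>) (snd \<pi>)"

definition run_last :: "('s, 'a) run \<Rightarrow> 's" where
  "run_last \<pi> = (if snd \<pi> = [] then fst \<pi> else snd (last (snd \<pi>)))"

definition sync_tree :: "('s, 'a, 'o) tso \<Rightarrow> bool" where
  "sync_tree T \<longleftrightarrow> (\<forall>s\<in>St T. \<exists>!\<pi>. is_run T \<pi> \<and> run_last \<pi> = s)"

definition V :: "('s, 'a, 'o) tso \<Rightarrow> (('s, 'a) run, 'a, 'o) tso" where
  "V T = \<lparr> St = {\<pi>. is_run T \<pi>},
           init = (init T, []),
           trans = {(\<pi>, a, (fst \<pi>, snd \<pi> @ [(a, q)])) | \<pi> a q.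
                      is_run T \<pi> \<and> (run_last \<pi>, a, q) \<in> trans T},
           obs = (\<lambda>\<pi>. obs T (run_last \<pi>)) \<rparr>"

definition V_mor :: "('s \<Rightarrow> 't) \<Rightarrow> ('s, 'a) run \<Rightarrow> ('t, 'a) run" where
  "V_mor f \<pi> = (f (fst \<pi>), map (\<lambda>(a, q). (a, f q)) (snd \<pi>))"

abbreviation unf :: "('s, 'a) run \<Rightarrow> 's" where
  "unf \<equiv> run_last"

definition lin_sys :: "'a list \<Rightarrow> (nat \<Rightarrow> 'o) \<Rightarrow> (nat, 'a, 'o) tso" where
  "lin_sys w om = \<lparr> St = {0..length w}, init = 0,
                     trans = {(j, w ! j, Suc j) | j. j < length w}, obs = om \<rparr>"

definition lin_open ::
  "'a set \<Rightarrow> ('o \<Rightarrow> 'o \<Rightarrow> real) \<Rightarrow> ('s, 'a, 'o) tso \<Rightarrow> ('t, 'a, 'o) tso \<Rightarrow> ('s \<Rightarrow> 't) \<Rightarrow> bool" where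
  "lin_open \<Sigma> d X Y f \<longleftrightarrow>
     (\<forall>w om w' om' e p q'.
        set w \<subseteq> \<Sigma> \<longrightarrow> set w' \<subseteq> \<Sigma> \<longrightarrow>
        bounded_morphism d (lin_sys w om) (lin_sys w' om') e \<longrightarrow>
        bounded_morphism d (lin_sys w om) X p \<longrightarrow>
        bounded_morphism d (lin_sys w' om') Y q' \<longrightarrow>
        (\<forall>j\<in>St (lin_sys w om). f (p j) = q' (e j)) \<longrightarrow>
        (\<exists>q. bounded_morphism d (lin_sys w' om') X q \<and>
             (\<forall>j\<in>St (lin_sys w om). q (e j) = p j) \<and>
             (\<forall>j\<in>St (lin_sys w' om'). f (q j) = q' j)))"

definition approx_bisim ::
  "('o \<Rightarrow> 'o \<Rightarrow> real) \<Rightarrow> real \<Rightarrow> ('s, 'a, 'o) tso \<Rightarrow> ('t, 'a, 'o) tso \<Rightarrow> ('s \<times> 't) set \<Rightarrow> bool" where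
  "approx_bisim d \<epsilon> T T' R \<longleftrightarrow>
     R \<subseteq> St T \<times> St T' \<and> (init T, init T') \<in> R \<and>
     (\<forall>(s, s')\<in>R. \<forall>a t. (s, a, t) \<in> trans T \<longrightarrow> (\<exists>t'. (s', a, t') \<in> trans T' \<and> (t, t') \<in> R)) \<and>
     (\<forall>(s, s')\<in>R. \<forall>a t'. (s', a, t') \<in> trans T' \<longrightarrow> (\<exists>t. (s, a, t) \<in> trans T \<and> (t, t') \<in> R)) \<and>
     (\<forall>(s, s')\<in>R. d (obs T s) (obs T' s') \<le> \<epsilon>)"

end

theory Submission
  imports Defs
begin


lemma run_last_nil[simp]: "run_last (q, []) = q"
  by (simp add: run_last_def)
lemma run_last_snoc[simp]: "run_last (q, xs @ [x]) = snd x"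
  by (simp add: run_last_def)
lemma run_last_cons[simp]: "run_last (q, (a, r) # xs) = run_last (r, xs)"
  by (cases xs) (simp_all add: run_last_def)

lemma path_from_snoc[simp]:
  "path_from D q (xs @ [(a, t)]) \<longleftrightarrow> path_from D q xs \<and> (run_last (q, xs), a, t) \<in> D"
  by (induction xs arbitrary: q) auto

lemma is_run_nil[simp]: "is_run T (q, []) \<longleftrightarrow> q = init T"
  by (simp add: is_run_def)
lemma is_run_snoc[simp]:
  "is_run T (q, xs @ [(a, t)]) \<longleftrightarrow> is_run T (q, xs) \<and> (run_last (q, xs), a, t) \<in> trans T"
  by (simp add: is_run_def)

lemma run_cases:
  assumes "is_run T \<pi>"
  obtains "\<pi> = (init T, [])"
  | xs a t where "\<pi> = (init T, xs @ [(a, t)])" "is_run T (init T, xs)" "(run_last (init T, xs), a, t) \<in> trans T"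
proof -
  obtain q xs where p: "\<pi> = (q, xs)" by fastforce
  have q: "q = init T" using assms p by (simp add: is_run_def)
  show ?thesis
  proof (cases xs rule: rev_exhaust)
    case Nil then show ?thesis using that p q by simp
  next
    case (snoc ys y) then show ?thesis using that p q assms by (cases y) auto
  qed
qed

lemma run_induct[consumes 1, case_names Nil snoc]:
  assumes "is_run T \<pi>"
    and "P (init T, [])"
    and "\<And>xs a t. is_run T (init T, xs) \<Longrightarrow> (run_last (init T, xs), a, t) \<in> trans T \<Longrightarrow>
            P (init T, xs) \<Longrightarrow> P (init T, xs @ [(a, t)])"
  shows "P \<pi>"
proof -
  obtain q xs where p: "\<pi> = (q, xs)" by fastforce
  have q: "q = init T" using assms p by (simp add: is_run_def)
  have "is_run T (init T, xs)" using assms p q by simp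
  then have "P (init T, xs)"
  proof (induction xs rule: rev_induct)
    case Nil then show ?case using assms by simp
  next
    case (snoc x xs) then show ?case using assms(3) by (cases x) auto
  qed
  then show ?thesis using p q by simp
qed

lemma run_last_in:
  assumes "wf_tso \<Sigma> T" "is_run T \<pi>" shows "run_last \<pi> \<in> St T"
  using assms(2) by (induction rule: run_induct) (use assms(1) in \<open>auto simp: wf_tso_def\<close>)

lemma St_V[simp]: "St (V T) = {\<pi>. is_run T \<pi>}" by (simp add: V_def)
lemma init_V[simp]: "init (V T) = (init T, [])" by (simp add: V_def)
lemma obs_V[simp]: "obs (V T) \<pi> = obs T (run_last \<pi>)" by (simp add: V_def)
lemma trans_V:
  "(\<pi>, a, \<tau>) \<in> trans (V T) \<longleftrightarrow> is_run T \<pi> \<and> (\<exists>q. \<tau> = (fst \<pi>, snd \<pi> @ [(a, q)]) \<and> (run_last \<pi>, a, q) \<in> trans T)"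
  by (auto simp: V_def)

lemma V_mor_snoc[simp]: "V_mor f (q, xs @ [(a, t)]) = (f q, snd (V_mor f (q, xs)) @ [(a, f t)])"
  by (simp add: V_mor_def)
lemma V_mor_nil[simp]: "V_mor f (q, []) = (f q, [])"
  by (simp add: V_mor_def)
lemma run_last_V_mor[simp]: "run_last (V_mor f \<pi>) = f (run_last \<pi>)"
  by (cases \<pi>; cases "snd \<pi>" rule: rev_exhaust) (auto simp: V_mor_def run_last_def)
lemma fst_V_mor[simp]: "fst (V_mor f \<pi>) = f (fst \<pi>)"
  by (simp add: V_mor_def)
lemma V_mor_id[simp]: "V_mor id \<pi> = \<pi>"
  by (simp add: V_mor_def case_prod_unfold)
lemma V_mor_comp: "V_mor (g \<circ> f) \<pi> = V_mor g (V_mor f \<pi>)"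
  by (simp add: V_mor_def case_prod_unfold)

lemma V_mor_run:
  assumes "ts_morphism T X f" "is_run T \<pi>" shows "is_run X (V_mor f \<pi>)"
  using assms(2)
proof (induction rule: run_induct)
  case Nil then show ?case using assms(1) by (simp add: ts_morphism_def)
next
  case (snoc xs a t)
  have "V_mor f (init T, xs) = (f (init T), snd (V_mor f (init T, xs)))" by (simp add: V_mor_def)
  then show ?case using snoc assms(1) by (auto simp: ts_morphism_def)
qed

definition canon :: "('s, 'a, 'o) tso \<Rightarrow> ('s, 'a) run \<Rightarrow> (('s, 'a) run, 'a) run" where
  "canon T \<pi> = ((init T, []), map (\<lambda>k. (fst (snd \<pi> ! k), (fst \<pi>, take (Suc k) (snd \<pi>)))) [0..<length (snd \<pi>)])"

lemma canon_nil[simp]: "canon T (q, []) = ((init T, []), [])"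
  by (simp add: canon_def)

lemma canon_snoc[simp]:
  "canon T (q, xs @ [(a, t)]) = ((init T, []), snd (canon T (q, xs)) @ [(a, (q, xs @ [(a, t)]))])"
  by (auto simp: canon_def nth_append)

lemma fst_canon[simp]: "fst (canon T \<pi>) = (init T, [])"
  by (simp add: canon_def)

lemma V_run_canon:
  assumes "is_run (V T) \<Pi>" shows "\<Pi> = canon T (run_last \<Pi>)"
  using assms
proof (induction rule: run_induct)
  case Nil then show ?case by simp
next
  case (snoc xs a \<tau>)
  let ?\<sigma> = "run_last (init (V T), xs)"
  obtain q where \<tau>: "\<tau> = (fst ?\<sigma>, snd ?\<sigma> @ [(a, q)])" using snoc(2) by (auto simp: trans_V)
  have e: "?\<sigma> = (fst ?\<sigma>, snd ?\<sigma>)" by simp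
  have "canon T \<tau> = ((init T, []), snd (canon T ?\<sigma>) @ [(a, \<tau>)])"
    unfolding \<tau> by (subst e) (simp only: canon_snoc)
  also have "snd (canon T ?\<sigma>) = xs" using snoc(3) by (metis snd_conv)
  finally show ?case by simp
qed

lemma canon_run:
  assumes "is_run T \<pi>" shows "is_run (V T) (canon T \<pi>) \<and> run_last (canon T \<pi>) = \<pi>"
  using assms
proof (induction rule: run_induct)
  case Nil then show ?case by (simp add: is_run_def)
next
  case (snoc xs a t)
  have e: "canon T (init T, xs) = ((init T, []), snd (canon T (init T, xs)))"
    by (metis fst_canon prod.collapse)
  have r: "is_run (V T) ((init T, []), snd (canon T (init T, xs)))" using snoc e by metis
  have l: "run_last ((init T, []), snd (canon T (init T, xs))) = (init T, xs)" using snoc e by metis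
  show ?case using r l snoc(1,2) by (simp add: trans_V)
qed

lemma sync_tree_V: "sync_tree (V T)"
  unfolding sync_tree_def
proof
  fix \<pi> assume "\<pi> \<in> St (V T)"
  then have r: "is_run T \<pi>" by simp
  show "\<exists>!\<Pi>. is_run (V T) \<Pi> \<and> run_last \<Pi> = \<pi>"
    using canon_run[OF r] V_run_canon by metis
qed

lemma wf_V: "wf_tso \<Sigma> T \<Longrightarrow> wf_tso \<Sigma> (V T)"
  by (auto simp: wf_tso_def trans_V is_run_def)


lemma V_mor_bounded:
  assumes "wf_tso \<Sigma> T" "bounded_morphism d T T' f"
  shows "bounded_morphism d (V T) (V T') (V_mor f)"
proof -
  obtain \<epsilon> where e: "\<epsilon> \<ge> 0" "eps_bounded d \<epsilon> T T' f" using assms(2) by (auto simp: bounded_morphism_def)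
  then have m: "ts_morphism T T' f" by (simp add: eps_bounded_def)
  have "eps_bounded d \<epsilon> (V T) (V T') (V_mor f)"
    unfolding eps_bounded_def ts_morphism_def
  proof (intro conjI allI impI ballI)
    fix \<pi> assume "\<pi> \<in> St (V T)" then show "V_mor f \<pi> \<in> St (V T')" using V_mor_run[OF m] by simp
  next
    show "V_mor f (init (V T)) = init (V T')" using m by (simp add: ts_morphism_def)
  next
    fix \<pi> a \<tau> assume "(\<pi>, a, \<tau>) \<in> trans (V T)"
    then obtain q where "is_run T \<pi>" "\<tau> = (fst \<pi>, snd \<pi> @ [(a, q)])" "(run_last \<pi>, a, q) \<in> trans T"
      by (auto simp: trans_V)
    moreover have "V_mor f \<pi> = (f (fst \<pi>), snd (V_mor f \<pi>))" by (metis fst_V_mor prod.collapse)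
    ultimately show "(V_mor f \<pi>, a, V_mor f \<tau>) \<in> trans (V T')" using m V_mor_run[OF m]
      by (auto simp: trans_V ts_morphism_def)
  next
    fix \<pi> assume "\<pi> \<in> St (V T)"
    then have "run_last \<pi> \<in> St T" using run_last_in[OF assms(1)] by simp
    then show "d (obs (V T) \<pi>) (obs (V T') (V_mor f \<pi>)) \<le> \<epsilon>" using e by (simp add: eps_bounded_def)
  qed
  then show ?thesis using e by (auto simp: bounded_morphism_def)
qed

lemma lift_unique:
  assumes "wf_tso \<Sigma> T" "ts_morphism T (V X) h" "\<forall>s\<in>St T. run_last (h s) = f s" "is_run T \<pi>"
  shows "h (run_last \<pi>) = V_mor f \<pi>"
  using assms(4)
proof (induction rule: run_induct)
  case Nil
  have "init T \<in> St T" using assms(1) by (simp add: wf_tso_def)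
  then have "f (init T) = init X" using assms(2,3) by (metis init_V run_last_nil ts_morphism_def)
  then show ?case using assms(2) by (simp add: ts_morphism_def)
next
  case (snoc xs a t)
  let ?s = "run_last (init T, xs)"
  have "(h ?s, a, h t) \<in> trans (V X)" using assms(2) snoc(2) by (simp add: ts_morphism_def)
  then obtain r where ht: "h t = (fst (h ?s), snd (h ?s) @ [(a, r)])" by (auto simp: trans_V)
  have "t \<in> St T" using snoc(2) assms(1) by (auto simp: wf_tso_def)
  then have "r = f t" using assms(3) ht by (metis run_last_snoc snd_conv)
  then show ?case using ht snoc(3) by (simp add: V_mor_def)
qed

definition runof :: "('s, 'a, 'o) tso \<Rightarrow> 's \<Rightarrow> ('s, 'a) run" where
  "runof T s = (THE \<pi>. is_run T \<pi> \<and> run_last \<pi> = s)"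

lemma runof:
  assumes "sync_tree T" "s \<in> St T" shows "is_run T (runof T s) \<and> run_last (runof T s) = s"
proof -
  have "\<exists>!\<pi>. is_run T \<pi> \<and> run_last \<pi> = s" using assms by (simp add: sync_tree_def)
  then show ?thesis unfolding runof_def by (rule theI')
qed

lemma runof_eq:
  assumes "wf_tso \<Sigma> T" "sync_tree T" "is_run T \<pi>" shows "runof T (run_last \<pi>) = \<pi>"
proof -
  have "run_last \<pi> \<in> St T" using run_last_in assms by blast
  then have "\<exists>!\<pi>'. is_run T \<pi>' \<and> run_last \<pi>' = run_last \<pi>" using assms by (simp add: sync_tree_def)
  then show ?thesis unfolding runof_def by (rule the1_equality) (use assms in simp)
qed

lemma lift_exists:
  assumes "wf_tso \<Sigma> T" "sync_tree T" "eps_bounded d \<epsilon> T X f"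
  shows "eps_bounded d \<epsilon> T (V X) (\<lambda>s. V_mor f (runof T s))"
  unfolding eps_bounded_def ts_morphism_def
proof (intro conjI allI impI ballI)
  have m: "ts_morphism T X f" using assms(3) by (simp add: eps_bounded_def)
  fix s assume "s \<in> St T"
  then show "V_mor f (runof T s) \<in> St (V X)" using runof[OF assms(2)] V_mor_run[OF m] by simp
next
  have m: "ts_morphism T X f" using assms(3) by (simp add: eps_bounded_def)
  have "runof T (init T) = (init T, [])" using runof_eq[OF assms(1,2), of "(init T, [])"] by simp
  then show "V_mor f (runof T (init (T))) = init (V X)" using m by (simp add: ts_morphism_def)
next
  have m: "ts_morphism T X f" using assms(3) by (simp add: eps_bounded_def)
  fix s a t assume st: "(s, a, t) \<in> trans T"
  then have sS: "s \<in> St T" using assms(1) by (auto simp: wf_tso_def)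
  obtain q xs where rs: "runof T s = (q, xs)" by fastforce
  have r: "is_run T (q, xs)" "run_last (q, xs) = s" using runof[OF assms(2) sS] rs by auto
  then have "is_run T (q, xs @ [(a, t)])" using st by simp
  then have "runof T t = (q, xs @ [(a, t)])" using runof_eq[OF assms(1,2)] by fastforce
  then show "(V_mor f (runof T s), a, V_mor f (runof T t)) \<in> trans (V X)"
    using rs r st m V_mor_run[OF m r(1)] by (auto simp: trans_V ts_morphism_def)
next
  fix s assume "s \<in> St T"
  then show "d (obs T s) (obs (V X) (V_mor f (runof T s))) \<le> \<epsilon>"
    using runof[OF assms(2)] assms(3) by (simp add: eps_bounded_def)
qed


lemma St_lin[simp]: "St (lin_sys w om) = {0..length w}" by (simp add: lin_sys_def)
lemma init_lin[simp]: "init (lin_sys w om) = 0" by (simp add: lin_sys_def)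
lemma obs_lin[simp]: "obs (lin_sys w om) = om" by (simp add: lin_sys_def)
lemma trans_lin: "(i, a, j) \<in> trans (lin_sys w om) \<longleftrightarrow> i < length w \<and> a = w ! i \<and> j = Suc i"
  by (auto simp: lin_sys_def)

lemma unf_eps0:
  assumes "pseudometric d" "wf_tso \<Sigma> X" shows "eps_bounded d 0 (V X) X run_last"
  using assms run_last_in[OF assms(2)]
  by (auto simp: eps_bounded_def ts_morphism_def pseudometric_def trans_V)

lemma lin_open_unf:
  assumes "wf_tso \<Sigma> X" shows "lin_open \<Sigma> d (V X) X run_last"
  unfolding lin_open_def
proof (intro allI impI)
  fix w :: "'a list" and om w' om' e p q'
  assume be: "bounded_morphism d (lin_sys w om) (lin_sys w' om') e"
    and bp: "bounded_morphism d (lin_sys w om) (V X) p"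
    and bq: "bounded_morphism d (lin_sys w' om') X q'"
    and h: "\<forall>j\<in>St (lin_sys w om). run_last (p j) = q' (e j)"
  have me: "ts_morphism (lin_sys w om) (lin_sys w' om') e" using be by (auto simp: bounded_morphism_def eps_bounded_def)
  have mp: "ts_morphism (lin_sys w om) (V X) p" using bp by (auto simp: bounded_morphism_def eps_bounded_def)
  obtain \<epsilon> where eq: "eps_bounded d \<epsilon> (lin_sys w' om') X q'" "\<epsilon> \<ge> 0" using bq by (auto simp: bounded_morphism_def)
  have mq: "ts_morphism (lin_sys w' om') X q'" using eq by (simp add: eps_bounded_def)
  have e0: "e 0 = 0" using me by (simp add: ts_morphism_def)
  have etr: "\<And>j. j < length w \<Longrightarrow> e j < length w' \<and> w ! j = w' ! e j \<and> e (Suc j) = Suc (e j)"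
    using me by (auto simp: ts_morphism_def trans_lin)
  have eid: "j \<le> length w \<Longrightarrow> e j = j" for j
    by (induction j) (use e0 etr in auto)
  have ww: "j < length w \<Longrightarrow> j < length w' \<and> w ! j = w' ! j" for j using etr eid by fastforce
  define qq where "qq j = (init X, map (\<lambda>k. (w' ! k, q' (Suc k))) [0..<j])" for j
  have qq0: "qq 0 = (init X, [])" by (simp add: qq_def)
  have qqf: "fst (qq j) = init X" for j by (simp add: qq_def)
  have qqS: "qq (Suc j) = (init X, snd (qq j) @ [(w' ! j, q' (Suc j))])" for j by (simp add: qq_def)
  have q'0: "q' 0 = init X" using mq by (simp add: ts_morphism_def)
  have lastq: "run_last (qq j) = q' j" for j
    by (cases j) (simp_all add: qq_def q'0)
  have qqe: "qq j = (init X, snd (qq j))" for j by (simp add: qq_def)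
  have runq: "j \<le> length w' \<Longrightarrow> is_run X (qq j)" for j
  proof (induction j)
    case 0 then show ?case by (simp add: qq0)
  next
    case (Suc j)
    have "(q' j, w' ! j, q' (Suc j)) \<in> trans X" using mq Suc.prems by (auto simp: ts_morphism_def trans_lin)
    then show ?case using Suc lastq[of j] qqe[of j] by (simp add: qqS)
  qed
  have p0: "p 0 = (init X, [])" using mp by (simp add: ts_morphism_def)
  have pq: "j \<le> length w \<Longrightarrow> p j = qq j" for j
  proof (induction j)
    case 0 then show ?case by (simp add: qq0 p0)
  next
    case (Suc j)
    have "(p j, w ! j, p (Suc j)) \<in> trans (V X)" using mp Suc.prems by (auto simp: ts_morphism_def trans_lin)
    then obtain r where r: "p (Suc j) = (fst (p j), snd (p j) @ [(w ! j, r)])" by (auto simp: trans_V)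
    have "run_last (p (Suc j)) = q' (e (Suc j))" using h Suc.prems by simp
    then have rq: "r = q' (Suc j)" using eid[of "Suc j"] Suc.prems r by simp
    have "fst (qq j) = init X" by (simp add: qq_def)
    then show ?case using rq r Suc ww[of j] qqe[of j] by (simp add: qqS)
  qed
  have "eps_bounded d \<epsilon> (lin_sys w' om') (V X) qq"
    unfolding eps_bounded_def ts_morphism_def
  proof (intro conjI allI impI ballI)
    fix j assume "j \<in> St (lin_sys w' om')" then show "qq j \<in> St (V X)" using runq by simp
  next
    show "qq (init (lin_sys w' om')) = init (V X)" by (simp add: qq0)
  next
    fix i a j assume "(i, a, j) \<in> trans (lin_sys w' om')"
    then have ij: "i < length w'" "a = w' ! i" "j = Suc i" by (auto simp: trans_lin)
    have "(q' i, w' ! i, q' (Suc i)) \<in> trans X" using mq ij by (auto simp: ts_morphism_def trans_lin)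
    then show "(qq i, a, qq j) \<in> trans (V X)" using ij runq[of i] lastq[of i] qqe[of i]
      by (simp add: trans_V qqS qqf)
  next
    fix j assume "j \<in> St (lin_sys w' om')"
    then show "d (obs (lin_sys w' om') j) (obs (V X) (qq j)) \<le> \<epsilon>" using eq lastq[of j]
      by (simp add: eps_bounded_def)
  qed
  then have "bounded_morphism d (lin_sys w' om') (V X) qq" using eq by (auto simp: bounded_morphism_def)
  moreover have "\<forall>j\<in>St (lin_sys w om). qq (e j) = p j" using eid pq by simp
  moreover have "\<forall>j\<in>St (lin_sys w' om'). run_last (qq j) = q' j" using lastq by simp
  ultimately show "\<exists>q. bounded_morphism d (lin_sys w' om') (V X) q \<and>
             (\<forall>j\<in>St (lin_sys w om). q (e j) = p j) \<and>
             (\<forall>j\<in>St (lin_sys w' om'). run_last (q j) = q' j)" by blast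
qed

lemma ab_fwd:
  assumes "approx_bisim d \<epsilon> T T' R" "(s, s') \<in> R" "(s, a, t) \<in> trans T"
  shows "\<exists>t'. (s', a, t') \<in> trans T' \<and> (t, t') \<in> R"
proof -
  have "\<forall>(s, s')\<in>R. \<forall>a t. (s, a, t) \<in> trans T \<longrightarrow> (\<exists>t'. (s', a, t') \<in> trans T' \<and> (t, t') \<in> R)"
    using assms(1) by (simp add: approx_bisim_def)
  then show ?thesis using assms(2,3) by blast
qed

lemma ab_bwd:
  assumes "approx_bisim d \<epsilon> T T' R" "(s, s') \<in> R" "(s', a, t') \<in> trans T'"
  shows "\<exists>t. (s, a, t) \<in> trans T \<and> (t, t') \<in> R"
proof -
  have "\<forall>(s, s')\<in>R. \<forall>a t'. (s', a, t') \<in> trans T' \<longrightarrow> (\<exists>t. (s, a, t) \<in> trans T \<and> (t, t') \<in> R)"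
    using assms(1) by (simp add: approx_bisim_def)
  then show ?thesis using assms(2,3) by blast
qed

lemma ab_obs:
  assumes "approx_bisim d \<epsilon> T T' R" "(s, s') \<in> R"
  shows "d (obs T s) (obs T' s') \<le> \<epsilon>"
proof -
  have "\<forall>(s, s')\<in>R. d (obs T s) (obs T' s') \<le> \<epsilon>"
    using assms(1) by (simp add: approx_bisim_def)
  then show ?thesis using assms(2) by blast
qed

lemma approx_bisimI:
  assumes "R \<subseteq> St T \<times> St T'" "(init T, init T') \<in> R"
    "\<And>s s' a t. (s, s') \<in> R \<Longrightarrow> (s, a, t) \<in> trans T \<Longrightarrow> \<exists>t'. (s', a, t') \<in> trans T' \<and> (t, t') \<in> R"
    "\<And>s s' a t'. (s, s') \<in> R \<Longrightarrow> (s', a, t') \<in> trans T' \<Longrightarrow> \<exists>t. (s, a, t) \<in> trans T \<and> (t, t') \<in> R"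
    "\<And>s s'. (s, s') \<in> R \<Longrightarrow> d (obs T s) (obs T' s') \<le> \<epsilon>"
  shows "approx_bisim d \<epsilon> T T' R"
  unfolding approx_bisim_def using assms by blast

lemma bisim_V1:
  assumes "approx_bisim d \<epsilon> T T' R"
  shows "approx_bisim d \<epsilon> (V T) (V T') {(\<pi>, \<pi>'). is_run T \<pi> \<and> is_run T' \<pi>' \<and> (run_last \<pi>, run_last \<pi>') \<in> R}"
    (is "approx_bisim d \<epsilon> (V T) (V T') ?R")
proof (rule approx_bisimI)
  show "?R \<subseteq> St (V T) \<times> St (V T')" by auto
  show "(init (V T), init (V T')) \<in> ?R" using assms by (auto simp: approx_bisim_def is_run_def)
next
  fix \<pi> \<pi>' a t assume x: "(\<pi>, \<pi>') \<in> ?R" and tr: "(\<pi>, a, t) \<in> trans (V T)"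
  obtain q where q: "t = (fst \<pi>, snd \<pi> @ [(a, q)])" "(run_last \<pi>, a, q) \<in> trans T"
    using tr by (auto simp: trans_V)
  have rel: "(run_last \<pi>, run_last \<pi>') \<in> R" "is_run T \<pi>" "is_run T' \<pi>'" using x by auto
  then obtain q' where q': "(run_last \<pi>', a, q') \<in> trans T'" "(q, q') \<in> R"
    using ab_fwd[OF assms rel(1) q(2)] by blast
  have "(\<pi>', a, (fst \<pi>', snd \<pi>' @ [(a, q')])) \<in> trans (V T')" using rel q' by (auto simp: trans_V)
  moreover have "is_run T (fst \<pi>, snd \<pi> @ [(a, q)])" using rel q by (metis is_run_snoc prod.collapse)
  moreover have "is_run T' (fst \<pi>', snd \<pi>' @ [(a, q')])" using rel q' by (metis is_run_snoc prod.collapse)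
  ultimately show "\<exists>t'. (\<pi>', a, t') \<in> trans (V T') \<and> (t, t') \<in> ?R"
    using q q' by (intro exI[of _ "(fst \<pi>', snd \<pi>' @ [(a, q')])"]) auto
next
  fix \<pi> \<pi>' a t' assume x: "(\<pi>, \<pi>') \<in> ?R" and tr: "(\<pi>', a, t') \<in> trans (V T')"
  obtain q' where q': "t' = (fst \<pi>', snd \<pi>' @ [(a, q')])" "(run_last \<pi>', a, q') \<in> trans T'"
    using tr by (auto simp: trans_V)
  have rel: "(run_last \<pi>, run_last \<pi>') \<in> R" "is_run T \<pi>" "is_run T' \<pi>'" using x by auto
  then obtain q where q: "(run_last \<pi>, a, q) \<in> trans T" "(q, q') \<in> R"
    using ab_bwd[OF assms rel(1) q'(2)] by blast
  have "(\<pi>, a, (fst \<pi>, snd \<pi> @ [(a, q)])) \<in> trans (V T)" using rel q by (auto simp: trans_V)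
  moreover have "is_run T (fst \<pi>, snd \<pi> @ [(a, q)])" using rel q by (metis is_run_snoc prod.collapse)
  moreover have "is_run T' (fst \<pi>', snd \<pi>' @ [(a, q')])" using rel q' by (metis is_run_snoc prod.collapse)
  ultimately show "\<exists>t. (\<pi>, a, t) \<in> trans (V T) \<and> (t, t') \<in> ?R"
    using q q' by (intro exI[of _ "(fst \<pi>, snd \<pi> @ [(a, q)])"]) auto
next
  fix \<pi> \<pi>' assume x: "(\<pi>, \<pi>') \<in> ?R"
  then have "(run_last \<pi>, run_last \<pi>') \<in> R" by simp
  then show "d (obs (V T) \<pi>) (obs (V T') \<pi>') \<le> \<epsilon>"
    using ab_obs[OF assms] by simp
qed

lemma bisim_V2:
  assumes "wf_tso \<Sigma> T" "wf_tso \<Sigma> T'" "approx_bisim d \<epsilon> (V T) (V T') R"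
  shows "approx_bisim d \<epsilon> T T' {(run_last \<pi>, run_last \<pi>') | \<pi> \<pi>'. (\<pi>, \<pi>') \<in> R}"
    (is "approx_bisim d \<epsilon> T T' ?R")
proof (rule approx_bisimI)
  have RS: "R \<subseteq> {\<pi>. is_run T \<pi>} \<times> {\<pi>. is_run T' \<pi>}" using assms(3) by (simp add: approx_bisim_def)
  then show "?R \<subseteq> St T \<times> St T'" using run_last_in[OF assms(1)] run_last_in[OF assms(2)] by blast
  have i: "((init T, []), (init T', [])) \<in> R" using assms(3) by (simp add: approx_bisim_def)
  have "(init T, init T') = (run_last (init T, []), run_last (init T', []))" by simp
  then show "(init T, init T') \<in> ?R" using i by blast
next
  fix s s' a t assume x: "(s, s') \<in> ?R" and tr: "(s, a, t) \<in> trans T"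
  then obtain \<pi> \<pi>' where xe: "s = run_last \<pi>" "s' = run_last \<pi>'" and r: "(\<pi>, \<pi>') \<in> R" by auto
  have "is_run T \<pi>" using r assms(3) by (auto simp: approx_bisim_def)
  then have "(\<pi>, a, (fst \<pi>, snd \<pi> @ [(a, t)])) \<in> trans (V T)" using tr xe by (auto simp: trans_V)
  then obtain \<tau>' where "(\<pi>', a, \<tau>') \<in> trans (V T')" "((fst \<pi>, snd \<pi> @ [(a, t)]), \<tau>') \<in> R"
    using ab_fwd[OF assms(3) r] by blast
  then obtain q' where "\<tau>' = (fst \<pi>', snd \<pi>' @ [(a, q')])" "(run_last \<pi>', a, q') \<in> trans T'"
    "((fst \<pi>, snd \<pi> @ [(a, t)]), \<tau>') \<in> R" by (auto simp: trans_V)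
  moreover have "(t, q') = (run_last (fst \<pi>, snd \<pi> @ [(a, t)]), run_last \<tau>')" using \<open>\<tau>' = _\<close> by simp
  ultimately show "\<exists>t'. (s', a, t') \<in> trans T' \<and> (t, t') \<in> ?R"
    using xe by blast
next
  fix s s' a t' assume x: "(s, s') \<in> ?R" and tr: "(s', a, t') \<in> trans T'"
  then obtain \<pi> \<pi>' where xe: "s = run_last \<pi>" "s' = run_last \<pi>'" and r: "(\<pi>, \<pi>') \<in> R" by auto
  have "is_run T' \<pi>'" using r assms(3) by (auto simp: approx_bisim_def)
  then have "(\<pi>', a, (fst \<pi>', snd \<pi>' @ [(a, t')])) \<in> trans (V T')" using tr xe by (auto simp: trans_V)
  then obtain \<tau> where "(\<pi>, a, \<tau>) \<in> trans (V T)" "(\<tau>, (fst \<pi>', snd \<pi>' @ [(a, t')])) \<in> R"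
    using ab_bwd[OF assms(3) r] by blast
  then obtain q where "\<tau> = (fst \<pi>, snd \<pi> @ [(a, q)])" "(run_last \<pi>, a, q) \<in> trans T"
    "(\<tau>, (fst \<pi>', snd \<pi>' @ [(a, t')])) \<in> R" by (auto simp: trans_V)
  moreover have "(q, t') = (run_last \<tau>, run_last (fst \<pi>', snd \<pi>' @ [(a, t')]))" using \<open>\<tau> = _\<close> by simp
  ultimately show "\<exists>t. (s, a, t) \<in> trans T \<and> (t, t') \<in> ?R"
    using xe by blast
next
  fix s s' assume x: "(s, s') \<in> ?R"
  then obtain \<pi> \<pi>' where xe: "s = run_last \<pi>" "s' = run_last \<pi>'" and r: "(\<pi>, \<pi>') \<in> R" by auto
  then show "d (obs T s) (obs T' s') \<le> \<epsilon>"
    using ab_obs[OF assms(3) r] by simp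
qed


theorem proposition4:
  fixes \<Sigma> :: "'a set" and d :: "'o \<Rightarrow> 'o \<Rightarrow> real"
  assumes "pseudometric d"
  shows
    \<comment> \<open>(1) V is a functor TS_Sigma O -> Tr_Sigma O ...\<close>
    "(\<forall>T :: ('s, 'a, 'o) tso. wf_tso \<Sigma> T \<longrightarrow> wf_tso \<Sigma> (V T) \<and> sync_tree (V T))
   \<and> (\<forall>(T :: ('s, 'a, 'o) tso) (T' :: ('t, 'a, 'o) tso) f.
        wf_tso \<Sigma> T \<longrightarrow> wf_tso \<Sigma> T' \<longrightarrow> bounded_morphism d T T' f \<longrightarrow>
        bounded_morphism d (V T) (V T') (V_mor f))
   \<and> (\<forall>T :: ('s, 'a, 'o) tso. wf_tso \<Sigma> T \<longrightarrow> (\<forall>\<pi>\<in>St (V T). V_mor id \<pi> = \<pi>))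
   \<and> (\<forall>(T :: ('s, 'a, 'o) tso) (T' :: ('t, 'a, 'o) tso) (T'' :: ('u, 'a, 'o) tso) f g.
        wf_tso \<Sigma> T \<longrightarrow> wf_tso \<Sigma> T' \<longrightarrow> wf_tso \<Sigma> T'' \<longrightarrow>
        bounded_morphism d T T' f \<longrightarrow> bounded_morphism d T' T'' g \<longrightarrow>
        (\<forall>\<pi>\<in>St (V T). V_mor (g \<circ> f) \<pi> = V_mor g (V_mor f \<pi>)))
    \<comment> \<open>... which is a coreflection: unf is a natural transformation from (inclusion o V)
        to the identity, universal from the inclusion Tr -> TS (so the inclusion is a
        fully faithful left adjoint of V), and its component at each tree is an iso\<close>
   \<and> (\<forall>(T :: ('s, 'a, 'o) tso) (T' :: ('t, 'a, 'o) tso) f.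
        wf_tso \<Sigma> T \<longrightarrow> wf_tso \<Sigma> T' \<longrightarrow> bounded_morphism d T T' f \<longrightarrow>
        (\<forall>\<pi>\<in>St (V T). unf (V_mor f \<pi>) = f (unf \<pi>)))
   \<and> (\<forall>(T :: ('t, 'a, 'o) tso) (X :: ('s, 'a, 'o) tso) f.
        wf_tso \<Sigma> T \<longrightarrow> sync_tree T \<longrightarrow> wf_tso \<Sigma> X \<longrightarrow> bounded_morphism d T X f \<longrightarrow>
        (\<exists>g. bounded_morphism d T (V X) g \<and> (\<forall>s\<in>St T. unf (g s) = f s) \<and>
             (\<forall>g'. bounded_morphism d T (V X) g' \<and> (\<forall>s\<in>St T. unf (g' s) = f s) \<longrightarrow>
                   (\<forall>s\<in>St T. g' s = g s))))
   \<and> (\<forall>T :: ('t, 'a, 'o) tso. wf_tso \<Sigma> T \<longrightarrow> sync_tree T \<longrightarrow>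
        (\<exists>h. bounded_morphism d T (V T) h \<and> (\<forall>s\<in>St T. unf (h s) = s) \<and>
             (\<forall>\<pi>\<in>St (V T). h (unf \<pi>) = \<pi>)))
    \<comment> \<open>(2) unf_X is a 0-bounded Lin-open morphism\<close>
   \<and> (\<forall>X :: ('s, 'a, 'o) tso. wf_tso \<Sigma> X \<longrightarrow>
        eps_bounded d 0 (V X) X unf \<and> lin_open \<Sigma> d (V X) X unf)
    \<comment> \<open>(3) approximate bisimilarity is reflected and preserved by V\<close>
   \<and> (\<forall>(\<epsilon>::real) (T :: ('s, 'a, 'o) tso) (T' :: ('t, 'a, 'o) tso).
        0 \<le> \<epsilon> \<longrightarrow> wf_tso \<Sigma> T \<longrightarrow> wf_tso \<Sigma> T' \<longrightarrow>
        ((\<exists>R. approx_bisim d \<epsilon> T T' R) \<longleftrightarrow> (\<exists>R. approx_bisim d \<epsilon> (V T) (V T') R)))"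
  proof -
  have p1: "\<forall>T :: ('s, 'a, 'o) tso. wf_tso \<Sigma> T \<longrightarrow> wf_tso \<Sigma> (V T) \<and> sync_tree (V T)"
    using wf_V sync_tree_V by blast
  have p2: "\<forall>(T :: ('s, 'a, 'o) tso) (T' :: ('t, 'a, 'o) tso) f.
        wf_tso \<Sigma> T \<longrightarrow> wf_tso \<Sigma> T' \<longrightarrow> bounded_morphism d T T' f \<longrightarrow>
        bounded_morphism d (V T) (V T') (V_mor f)"
    using V_mor_bounded by blast
  have p3: "\<forall>T :: ('s, 'a, 'o) tso. wf_tso \<Sigma> T \<longrightarrow> (\<forall>\<pi>\<in>St (V T). V_mor id \<pi> = \<pi>)" by simp
  have p4: "\<forall>(T :: ('s, 'a, 'o) tso) (T' :: ('t, 'a, 'o) tso) (T'' :: ('u, 'a, 'o) tso) f g.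
        wf_tso \<Sigma> T \<longrightarrow> wf_tso \<Sigma> T' \<longrightarrow> wf_tso \<Sigma> T'' \<longrightarrow>
        bounded_morphism d T T' f \<longrightarrow> bounded_morphism d T' T'' g \<longrightarrow>
        (\<forall>\<pi>\<in>St (V T). V_mor (g \<circ> f) \<pi> = V_mor g (V_mor f \<pi>))"
    using V_mor_comp by blast
  have p5: "\<forall>(T :: ('s, 'a, 'o) tso) (T' :: ('t, 'a, 'o) tso) f.
        wf_tso \<Sigma> T \<longrightarrow> wf_tso \<Sigma> T' \<longrightarrow> bounded_morphism d T T' f \<longrightarrow>
        (\<forall>\<pi>\<in>St (V T). unf (V_mor f \<pi>) = f (unf \<pi>))" by simp
  have p6: "\<forall>(T :: ('t, 'a, 'o) tso) (X :: ('s, 'a, 'o) tso) f.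
        wf_tso \<Sigma> T \<longrightarrow> sync_tree T \<longrightarrow> wf_tso \<Sigma> X \<longrightarrow> bounded_morphism d T X f \<longrightarrow>
        (\<exists>g. bounded_morphism d T (V X) g \<and> (\<forall>s\<in>St T. unf (g s) = f s) \<and>
             (\<forall>g'. bounded_morphism d T (V X) g' \<and> (\<forall>s\<in>St T. unf (g' s) = f s) \<longrightarrow>
                   (\<forall>s\<in>St T. g' s = g s)))"
  proof (intro allI impI)
    fix T :: "('t, 'a, 'o) tso" and X :: "('s, 'a, 'o) tso" and f
    assume wT: "wf_tso \<Sigma> T" and sT: "sync_tree T" and wX: "wf_tso \<Sigma> X" and bf: "bounded_morphism d T X f"
    obtain \<epsilon> where e: "\<epsilon> \<ge> 0" "eps_bounded d \<epsilon> T X f" using bf by (auto simp: bounded_morphism_def)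
    let ?g = "\<lambda>s. V_mor f (runof T s)"
    have bg: "bounded_morphism d T (V X) ?g"
      using lift_exists[OF wT sT e(2)] e(1) by (auto simp: bounded_morphism_def)
    have ug: "\<forall>s\<in>St T. unf (?g s) = f s" using runof[OF sT] by simp
    have uq: "\<forall>s\<in>St T. g' s = ?g s" if "bounded_morphism d T (V X) g' \<and> (\<forall>s\<in>St T. unf (g' s) = f s)" for g'
    proof
      fix s assume sS: "s \<in> St T"
      have m: "ts_morphism T (V X) g'" using that by (auto simp: bounded_morphism_def eps_bounded_def)
      have "g' (run_last (runof T s)) = V_mor f (runof T s)"
        using lift_unique[OF wT m] that runof[OF sT sS] by blast
      then show "g' s = ?g s" using runof[OF sT sS] by simp
    qed
    show "\<exists>g. bounded_morphism d T (V X) g \<and> (\<forall>s\<in>St T. unf (g s) = f s) \<and>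
             (\<forall>g'. bounded_morphism d T (V X) g' \<and> (\<forall>s\<in>St T. unf (g' s) = f s) \<longrightarrow>
                   (\<forall>s\<in>St T. g' s = g s))"
      using bg ug uq by blast
  qed
  have p7: "\<forall>T :: ('t, 'a, 'o) tso. wf_tso \<Sigma> T \<longrightarrow> sync_tree T \<longrightarrow>
        (\<exists>h. bounded_morphism d T (V T) h \<and> (\<forall>s\<in>St T. unf (h s) = s) \<and>
             (\<forall>\<pi>\<in>St (V T). h (unf \<pi>) = \<pi>))"
  proof (intro allI impI)
    fix T :: "('t, 'a, 'o) tso"
    assume wT: "wf_tso \<Sigma> T" and sT: "sync_tree T"
    have e: "eps_bounded d 0 T T id"
      using assms by (auto simp: eps_bounded_def ts_morphism_def pseudometric_def)
    have "eps_bounded d 0 T (V T) (runof T)"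
      using lift_exists[OF wT sT e] by simp
    then have "bounded_morphism d T (V T) (runof T)" by (auto simp: bounded_morphism_def)
    moreover have "\<forall>s\<in>St T. unf (runof T s) = s" using runof[OF sT] by simp
    moreover have "\<forall>\<pi>\<in>St (V T). runof T (unf \<pi>) = \<pi>" using runof_eq[OF wT sT] by simp
    ultimately show "\<exists>h. bounded_morphism d T (V T) h \<and> (\<forall>s\<in>St T. unf (h s) = s) \<and>
             (\<forall>\<pi>\<in>St (V T). h (unf \<pi>) = \<pi>)" by blast
  qed
  have p8: "\<forall>X :: ('s, 'a, 'o) tso. wf_tso \<Sigma> X \<longrightarrow>
        eps_bounded d 0 (V X) X unf \<and> lin_open \<Sigma> d (V X) X unf"
    using unf_eps0[OF assms] lin_open_unf by blast
  have p9: "\<forall>(\<epsilon>::real) (T :: ('s, 'a, 'o) tso) (T' :: ('t, 'a, 'o) tso).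
        0 \<le> \<epsilon> \<longrightarrow> wf_tso \<Sigma> T \<longrightarrow> wf_tso \<Sigma> T' \<longrightarrow>
        ((\<exists>R. approx_bisim d \<epsilon> T T' R) \<longleftrightarrow> (\<exists>R. approx_bisim d \<epsilon> (V T) (V T') R))"
    using bisim_V1 bisim_V2 by blast
  show ?thesis using p1 p2 p3 p4 p5 p6 p7 p8 p9 by blast
qed

end
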